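(* Let $H(x,p)=\frac12(H_{11}p^2+2H_{12}px+H_{22}x^2)$ with real coefficients, $H_{11}\neq0$ and $H_{11}H_{22}-H_{12}^2<0$. Let $f(p,x)=\beta xp+\frac\gamma2x^2$ with $$\beta=\tfrac12\log|H_{11}|,\qquad\gamma=\frac{H_{12}}{H_{11}}\frac{\beta}{\sinh\beta}e^{\beta}.$$ Then $$\exp(X_f)H=\frac12\frac{H_{11}}{|H_{11}|}\left(p^2+\det(\mathrm{Hess}(H))\,x^2\right),$$ where $\det(\mathrm{Hess}(H))=H_{11}H_{22}-H_{12}^2$.
   Context: On $\mathbb R^2$ with coordinates $(x,p)$, the Hamiltonian vector field of $f$ is $X_f=\frac{\partial f}{\partial p}\partial_x-\frac{\partial f}{\partial x}\partial_p$ (here $X_f=\beta x\partial_x-(\beta p+\gamma x)\partial_p$). For a function $g$, $\exp(sX_f)g$ denotes $g\circ\Phi_s$ where $\Phi_s$ is the time-$s$ flow of $X_f$; $\exp(X_f)g$ is the case $s=1$. *)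

theory Defs
  imports "HOL-Analysis.Analysis"
begin

text \<open>Points of the plane are pairs (x, p). Hamiltonian vector field
  X_f = (df/dp) d_x - (df/dx) d_p, written as the map z |-> (dx/dt, dp/dt).\<close>
definition ham_vf :: "(real \<times> real \<Rightarrow> real) \<Rightarrow> real \<times> real \<Rightarrow> real \<times> real" where
  "ham_vf f z = (deriv (\<lambda>q. f (fst z, q)) (snd z), - deriv (\<lambda>y. f (y, snd z)) (fst z))"

definition is_flow :: "(real \<times> real \<Rightarrow> real \<times> real) \<Rightarrow> (real \<Rightarrow> real \<times> real \<Rightarrow> real \<times> real) \<Rightarrow> bool" where
  "is_flow V \<Phi> \<longleftrightarrow> (\<forall>z. \<Phi> 0 z = z) \<and>
     (\<forall>z s. ((\<lambda>t. \<Phi> t z) has_vector_derivative V (\<Phi> s z)) (at s))"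

definition flow_of :: "(real \<times> real \<Rightarrow> real \<times> real) \<Rightarrow> real \<Rightarrow> real \<times> real \<Rightarrow> real \<times> real" where
  "flow_of V = (SOME \<Phi>. is_flow V \<Phi>)"

definition exp_ham :: "real \<Rightarrow> (real \<times> real \<Rightarrow> real) \<Rightarrow> (real \<times> real \<Rightarrow> real) \<Rightarrow> real \<times> real \<Rightarrow> real" where
  "exp_ham s f g = g \<circ> flow_of (ham_vf f) s"

definition b_over_sinh :: "real \<Rightarrow> real" where
  "b_over_sinh b = (if b = 0 then 1 else b / sinh b)"

end

theory Submission
  imports Defs
begin

lemma vd_fst:
  assumes "(u has_vector_derivative v) F"
  shows "((\<lambda>t. fst (u t)) has_real_derivative fst v) F"
proof -
  have "((\<lambda>t. fst (u t)) has_derivative (\<lambda>x. fst (x *\<^sub>R v))) F"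
    using has_derivative_fst[OF assms[unfolded has_vector_derivative_def]] .
  moreover have "(\<lambda>x. fst (x *\<^sub>R v)) = (*) (fst v)" by (auto simp: fun_eq_iff)
  ultimately show ?thesis unfolding has_field_derivative_def by simp
qed

lemma vd_snd:
  assumes "(u has_vector_derivative v) F"
  shows "((\<lambda>t. snd (u t)) has_real_derivative snd v) F"
proof -
  have "((\<lambda>t. snd (u t)) has_derivative (\<lambda>x. snd (x *\<^sub>R v))) F"
    using has_derivative_snd[OF assms[unfolded has_vector_derivative_def]] .
  moreover have "(\<lambda>x. snd (x *\<^sub>R v)) = (*) (snd v)" by (auto simp: fun_eq_iff)
  ultimately show ?thesis unfolding has_field_derivative_def by simp
qed

lemma lin_ode:
  fixes y :: "real \<Rightarrow> real"
  assumes "\<And>t. (y has_real_derivative c * y t) (at t)"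
  shows "y t = y 0 * exp (c * t)"
proof -
  have "\<forall>t. ((\<lambda>t. y t * exp (- c * t)) has_real_derivative 0) (at t)"
  proof
    fix t
    have de: "((\<lambda>t. exp (- c * t)) has_real_derivative exp (- c * t) * (- c * 1)) (at t)"
      by (intro derivative_eq_intros) auto
    have "((\<lambda>t. y t * exp (- c * t)) has_real_derivative
        (c * y t) * exp (- c * t) + exp (- c * t) * (- c * 1) * y t) (at t)"
      by (rule DERIV_mult[OF assms de])
    then show "((\<lambda>t. y t * exp (- c * t)) has_real_derivative 0) (at t)"
      by (simp add: algebra_simps)
  qed
  from DERIV_isconst_all[OF this, of t 0]
  have "y t * exp (- c * t) = y 0" by simp
  then have "y t * exp (- c * t) * exp (c * t) = y 0 * exp (c * t)" by simp
  then show ?thesis by (simp add: mult.assoc flip: exp_add)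
qed

definition EE :: "real \<Rightarrow> real \<Rightarrow> real" where
  "EE b t = (if b = 0 then t else (exp (2 * b * t) - 1) / (2 * b))"

lemma EE_deriv: "(EE b has_real_derivative exp (2 * b * t)) (at t)"
proof (cases "b = 0")
  case True
  then have "EE b = (\<lambda>t. t)" by (simp add: fun_eq_iff EE_def)
  then show ?thesis using True by (simp add: DERIV_ident)
next
  case False
  have "((\<lambda>t. (exp (2 * b * t) - 1) / (2 * b)) has_real_derivative
     (exp (2 * b * t) * (2 * b * 1) - 0) / (2 * b)) (at t)"
    using False by (intro derivative_eq_intros) auto
  then show ?thesis using False unfolding EE_def by simp
qed

lemma EE_0: "EE b 0 = 0" by (simp add: EE_def)

definition PP :: "real \<Rightarrow> real \<Rightarrow> real \<Rightarrow> real \<times> real \<Rightarrow> real \<times> real" where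
  "PP b g t z = (fst z * exp (b * t), exp (- b * t) * (snd z - g * fst z * EE b t))"

lemma ham_vf_f:
  "ham_vf (\<lambda>(x, p). b * x * p + g / 2 * x\<^sup>2) z = (b * fst z, - (b * snd z + g * fst z))"
proof -
  have 1: "((\<lambda>q. b * fst z * q + g / 2 * (fst z)\<^sup>2) has_real_derivative b * fst z) (at (snd z))"
    by (auto intro!: derivative_eq_intros)
  have 2: "((\<lambda>y. b * y * snd z + g / 2 * y\<^sup>2) has_real_derivative b * snd z + g * fst z) (at (fst z))"
    by (auto intro!: derivative_eq_intros)
  show ?thesis unfolding ham_vf_def using DERIV_imp_deriv[OF 1] DERIV_imp_deriv[OF 2] by simp
qed

lemma PP_flow: "is_flow (ham_vf (\<lambda>(x, p). b * x * p + g / 2 * x\<^sup>2)) (PP b g)"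
  unfolding is_flow_def ham_vf_f
proof safe
  fix z show "PP b g 0 z = z" by (simp add: PP_def EE_0)
next
  fix z :: "real \<times> real" and s :: real
  obtain x p where z: "z = (x, p)" by (cases z)
  have d1: "((\<lambda>t. x * exp (b * t)) has_real_derivative x * (exp (b * s) * (b * 1))) (at s)"
    by (intro derivative_eq_intros) auto
  have d2: "((\<lambda>t. exp (- b * t) * (p - g * x * EE b t)) has_real_derivative
      exp (- b * s) * (- b * 1) * (p - g * x * EE b s) + exp (- b * s) * (0 - g * x * exp (2 * b * s))) (at s)"
    by (intro derivative_eq_intros EE_deriv) (auto simp: EE_deriv)
  have e: "exp (- b * s) * exp (2 * b * s) = exp (b * s)"
    by (simp flip: exp_add)
  have D: "((\<lambda>t. PP b g t z) has_vector_derivative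
     (x * (exp (b * s) * (b * 1)), exp (- b * s) * (- b * 1) * (p - g * x * EE b s) + exp (- b * s) * (0 - g * x * exp (2 * b * s)))) (at s)"
    unfolding PP_def z fst_conv snd_conv
    by (intro has_vector_derivative_Pair d1[unfolded has_real_derivative_iff_has_vector_derivative]
         d2[unfolded has_real_derivative_iff_has_vector_derivative])
  have eq: "(x * (exp (b * s) * (b * 1)), exp (- b * s) * (- b * 1) * (p - g * x * EE b s) + exp (- b * s) * (0 - g * x * exp (2 * b * s)))
     = (b * fst (PP b g s z), - (b * snd (PP b g s z) + g * fst (PP b g s z)))"
    unfolding PP_def z fst_conv snd_conv using e
    by (simp add: algebra_simps)
  show "((\<lambda>t. PP b g t z) has_vector_derivative
     (b * fst (PP b g s z), - (b * snd (PP b g s z) + g * fst (PP b g s z)))) (at s)" using D by (simp only: eq)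
qed

lemma flow_unique:
  assumes "is_flow (ham_vf (\<lambda>(x, p). b * x * p + g / 2 * x\<^sup>2)) \<Phi>"
  shows "\<Phi> t z = PP b g t z"
proof -
  obtain x p where z: "z = (x, p)" by (cases z)
  from assms have i0: "\<Phi> 0 z = z"
    and iD: "\<And>s. ((\<lambda>t. \<Phi> t z) has_vector_derivative
        (b * fst (\<Phi> s z), - (b * snd (\<Phi> s z) + g * fst (\<Phi> s z)))) (at s)"
    unfolding is_flow_def ham_vf_f by blast+
  from PP_flow[of b g] have jD: "\<And>s. ((\<lambda>t. PP b g t z) has_vector_derivative
        (b * fst (PP b g s z), - (b * snd (PP b g s z) + g * fst (PP b g s z)))) (at s)"
    unfolding is_flow_def ham_vf_f by blast
  have a: "\<And>t. fst (\<Phi> t z) = fst (PP b g t z)"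
  proof -
    fix t
    have "fst (\<Phi> t z) = fst (\<Phi> 0 z) * exp (b * t)"
      by (rule lin_ode) (use vd_fst[OF iD] in simp)
    then show "fst (\<Phi> t z) = fst (PP b g t z)" using i0 by (simp add: PP_def z)
  qed
  have d: "snd (\<Phi> t z) - snd (PP b g t z) = (snd (\<Phi> 0 z) - snd (PP b g 0 z)) * exp (- b * t)"
  proof (rule lin_ode)
    fix s
    have "((\<lambda>t. snd (\<Phi> t z) - snd (PP b g t z)) has_real_derivative
       (- (b * snd (\<Phi> s z) + g * fst (\<Phi> s z))) - (- (b * snd (PP b g s z) + g * fst (PP b g s z)))) (at s)"
      using DERIV_diff[OF vd_snd[OF iD] vd_snd[OF jD]] by simp
    then show "((\<lambda>t. snd (\<Phi> t z) - snd (PP b g t z)) has_real_derivative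
       - b * (snd (\<Phi> s z) - snd (PP b g s z))) (at s)"
      using a[of s] by (simp add: algebra_simps)
  qed
  have "snd (\<Phi> 0 z) - snd (PP b g 0 z) = 0" using i0 by (simp add: PP_def z EE_0)
  with d have "snd (\<Phi> t z) = snd (PP b g t z)" by simp
  with a[of t] show ?thesis by (simp add: prod_eq_iff)
qed

lemma flow_of_eq: "flow_of (ham_vf (\<lambda>(x, p). b * x * p + g / 2 * x\<^sup>2)) = PP b g"
  unfolding flow_of_def
  by (rule someI2[of _ "PP b g"], rule PP_flow) (auto simp: fun_eq_iff flow_unique)

theorem lemma4p5:
  fixes H11 H12 H22 :: real
  assumes "H11 \<noteq> 0" and "H11 * H22 - H12\<^sup>2 < 0"
  defines "\<beta> \<equiv> ln \<bar>H11\<bar> / 2"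
  defines "\<gamma> \<equiv> H12 / H11 * b_over_sinh \<beta> * exp \<beta>"
  defines "H \<equiv> (\<lambda>(x, p). (H11 * p\<^sup>2 + 2 * H12 * p * x + H22 * x\<^sup>2) / 2)"
  defines "f \<equiv> (\<lambda>(x, p). \<beta> * x * p + \<gamma> / 2 * x\<^sup>2)"
  shows "exp_ham 1 f H =
    (\<lambda>(x, p). (H11 / \<bar>H11\<bar>) * (p\<^sup>2 + (H11 * H22 - H12\<^sup>2) * x\<^sup>2) / 2)"
proof -
  define u where "u = exp \<beta>"
  have u0: "u > 0" by (simp add: u_def)
  have uu: "u * u = \<bar>H11\<bar>"
    using assms(1) by (simp add: u_def \<beta>_def flip: exp_add)
  have hh: "H11 * H11 = u * u * (u * u)" by (metis uu abs_mult_self_eq)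
  have um: "exp (- \<beta>) = 1 / u" by (simp add: u_def exp_minus field_simps)
  have K: "\<gamma> * EE \<beta> 1 = H12 / H11 * u * u"
  proof (cases "\<beta> = 0")
    case True
    then show ?thesis by (simp add: \<gamma>_def EE_def b_over_sinh_def u_def)
  next
    case False
    have sh: "sinh \<beta> = (u * u - 1) / (2 * u)" using u0 by (simp add: sinh_def u_def exp_minus field_simps)
    have "sinh \<beta> \<noteq> 0" using False by simp
    then have "u * u - 1 \<noteq> 0" using sh u0 by auto
    moreover have "exp (2 * \<beta> * 1) = u * u" by (simp add: u_def flip: exp_add)
    ultimately show ?thesis using False u0 assms(1) unfolding \<gamma>_def EE_def b_over_sinh_def sh u_def[symmetric]
      by (simp add: field_simps)
  qed
  have hf: "f = (\<lambda>(x, p). \<beta> * x * p + \<gamma> / 2 * x\<^sup>2)" by (simp add: f_def)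
  show ?thesis
  proof (rule ext, clarify)
    fix x p
    have "exp_ham 1 f H (x, p) = H (x * u, 1 / u * (p - \<gamma> * x * EE \<beta> 1))"
      unfolding exp_ham_def hf flow_of_eq by (simp add: PP_def u_def um)
    also have "\<dots> = H (x * u, 1 / u * (p - H12 / H11 * u * u * x))"
    proof -
      have "\<gamma> * x * EE \<beta> 1 = (\<gamma> * EE \<beta> 1) * x" by (simp add: ac_simps)
      also have "\<dots> = H12 / H11 * u * u * x" unfolding K ..
      finally show ?thesis by simp
    qed
    also have "\<dots> = (H11 / \<bar>H11\<bar>) * (p\<^sup>2 + (H11 * H22 - H12\<^sup>2) * x\<^sup>2) / 2"
      unfolding H_def using u0 assms(1) uu[symmetric]
      by (simp add: field_simps power2_eq_square) (use hh in algebra)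
    finally show "exp_ham 1 f H (x, p) = (H11 / \<bar>H11\<bar>) * (p\<^sup>2 + (H11 * H22 - H12\<^sup>2) * x\<^sup>2) / 2" .
  qed
qed

end
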